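(* Let $\Omega_2=\{\omega_1,\omega_2\}$ with $\omega_1\neq\omega_2$, and $\mathcal{A}_2=2^{\Omega_2}$. A $q$-measure $\mu$ on $\mathcal{A}_2$ actualizes the coevent $\omega_1^*\omega_2^*$ if and only if $\mu(\{\omega_1\})=\mu(\{\omega_2\})=0$ and $\mu(\Omega_2)>0$.
   Context: Let $\Omega$ be a finite nonempty set and $\mathcal{A}=2^\Omega$. A coevent is a map $\phi:\mathcal{A}\to\{0,1\}$ with $\phi(\emptyset)=0$. For $\omega\in\Omega$ the evaluation map $\omega^*$ is the coevent with $\omega^*(A)=1$ if $\omega\in A$ and $0$ otherwise. Coevents are combined pointwise: $(\phi\oplus\psi)(A)=\phi(A)+\psi(A) \bmod 2$ and $(\phi\psi)(A)=\phi(A)\psi(A)$. For $f:\Omega\to[0,\infty)$ and a coevent $\phi$, the $q$-integral is $\int f\,d\phi=\int_0^\infty \phi(\{\omega\in\Omega: f(\omega)>\lambda\})\,d\lambda$ (Lebesgue measure in $\lambda$), and for $A\in\mathcal{A}$, $\int_A f\,d\phi=\int f\chi_A\,d\phi$. A $q$-measure is a map $\mu:\mathcal{A}\to[0,\infty)$ such that for all pairwise disjoint $A,B,C\in\mathcal{A}$: $\mu(A\cup B\cup C)=\mu(A\cup B)+\mu(A\cup C)+\mu(B\cup C)-\mu(A)-\mu(B)-\mu(C)$. The $q$-measure $\mu$ actualizes $\phi$ if there is a symmetric function $f:\Omega\times\Omega\to(0,\infty)$ such that for all $A\in\mathcal{A}$, $\mu(A)=\int g_A\,d\phi$, where $g_A(\omega')=\int_A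 f(\cdot,\omega')\,d\phi$ (the $q$-integral over $A$ of $\omega\mapsto f(\omega,\omega')$). *)

theory Defs
  imports "HOL-Analysis.Analysis"
begin

text \<open>A coevent is a map
  from events to {0,1}; we encode {0,1} as bool (1 = True), so that the
  pointwise product is conjunction and addition mod 2 is exclusive or.
  Only the values on subsets of Omega are relevant.\<close>

definition coevent :: "'a set \<Rightarrow> ('a set \<Rightarrow> bool) \<Rightarrow> bool" where
  "coevent \<Omega> \<phi> \<longleftrightarrow> \<not> \<phi> {}"

definition eval_map :: "'a \<Rightarrow> ('a set \<Rightarrow> bool)" where
  "eval_map \<omega> = (\<lambda>A. \<omega> \<in> A)"

definition coev_sum :: "('a set \<Rightarrow> bool) \<Rightarrow> ('a set \<Rightarrow> bool) \<Rightarrow> ('a set \<Rightarrow> bool)" where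
  "coev_sum \<phi> \<psi> = (\<lambda>A. \<phi> A \<noteq> \<psi> A)"

definition coev_prod :: "('a set \<Rightarrow> bool) \<Rightarrow> ('a set \<Rightarrow> bool) \<Rightarrow> ('a set \<Rightarrow> bool)" where
  "coev_prod \<phi> \<psi> = (\<lambda>A. \<phi> A \<and> \<psi> A)"

definition q_integral :: "'a set \<Rightarrow> ('a \<Rightarrow> real) \<Rightarrow> ('a set \<Rightarrow> bool) \<Rightarrow> real" where
  "q_integral \<Omega> f \<phi> = (LBINT l:{0..}. of_bool (\<phi> {\<omega>\<in>\<Omega>. f \<omega> > l}))"

definition q_integral_on :: "'a set \<Rightarrow> 'a set \<Rightarrow> ('a \<Rightarrow> real) \<Rightarrow> ('a set \<Rightarrow> bool) \<Rightarrow> real" where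
  "q_integral_on \<Omega> A f \<phi> = q_integral \<Omega> (\<lambda>\<omega>. f \<omega> * indicator A \<omega>) \<phi>"

definition q_measure :: "'a set \<Rightarrow> ('a set \<Rightarrow> real) \<Rightarrow> bool" where
  "q_measure \<Omega> \<mu> \<longleftrightarrow>
     (\<forall>A\<in>Pow \<Omega>. \<mu> A \<ge> 0) \<and>
     (\<forall>A\<in>Pow \<Omega>. \<forall>B\<in>Pow \<Omega>. \<forall>C\<in>Pow \<Omega>.
        A \<inter> B = {} \<and> A \<inter> C = {} \<and> B \<inter> C = {} \<longrightarrow>
        \<mu> (A \<union> B \<union> C) = \<mu> (A \<union> B) + \<mu> (A \<union> C) + \<mu> (B \<union> C) - \<mu> A - \<mu> B - \<mu> C)"

definition actualizes :: "'a set \<Rightarrow> ('a set \<Rightarrow> real) \<Rightarrow> ('a set \<Rightarrow> bool) \<Rightarrow> bool" where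
  "actualizes \<Omega> \<mu> \<phi> \<longleftrightarrow>
     (\<exists>f :: 'a \<Rightarrow> 'a \<Rightarrow> real.
        (\<forall>\<omega>\<in>\<Omega>. \<forall>\<omega>'\<in>\<Omega>. f \<omega> \<omega>' = f \<omega>' \<omega> \<and> f \<omega> \<omega>' > 0) \<and>
        (\<forall>A\<in>Pow \<Omega>. \<mu> A =
           q_integral \<Omega> (\<lambda>\<omega>'. q_integral_on \<Omega> A (\<lambda>\<omega>. f \<omega> \<omega>') \<phi>) \<phi>))"

end

theory Submission
  imports Defs
begin

lemma L: "(LBINT l:{0..}. of_bool (l < m)) = max 0 (m::real)"
proof -
  have eq: "(\<lambda>l::real. indicator {0..} l *\<^sub>R (of_bool (l < m)::real)) = indicator {0..<max 0 m}"
    by (rule ext) (auto simp: indicator_def)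
  have "(LBINT l:{0..}. of_bool (l < m)) = integral\<^sup>L lborel (indicator {0..<max 0 m} :: real \<Rightarrow> real)"
    unfolding set_lebesgue_integral_def eq by simp
  also have "\<dots> = measure lborel {0..<max 0 m}"
    by (simp add: emeasure_lborel_Ico)
  also have "\<dots> = max 0 m" by (simp del: measure_lborel_Ico add: measure_lborel_Ico[of 0 "max 0 m"])
  finally show ?thesis .
qed

lemma Q:
  "q_integral {a,b} g (coev_prod (eval_map a) (eval_map b)) = max 0 (min (g a) (g b))"
proof -
  have "\<And>l. coev_prod (eval_map a) (eval_map b) {\<omega>\<in>{a,b}. g \<omega> > l} = (l < min (g a) (g b))"
    by (auto simp: coev_prod_def eval_map_def)
  then have "q_integral {a,b} g (coev_prod (eval_map a) (eval_map b)) = (LBINT l:{0..}. of_bool (l < min (g a) (g b)))"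
    unfolding q_integral_def by presburger
  then show ?thesis by (simp only: L)
qed

theorem theorem4p2:
  fixes \<omega>1 \<omega>2 :: 'a and \<mu> :: "'a set \<Rightarrow> real"
  assumes "\<omega>1 \<noteq> \<omega>2"
    and "q_measure {\<omega>1, \<omega>2} \<mu>"
  shows "actualizes {\<omega>1, \<omega>2} \<mu> (coev_prod (eval_map \<omega>1) (eval_map \<omega>2)) \<longleftrightarrow>
         \<mu> {\<omega>1} = 0 \<and> \<mu> {\<omega>2} = 0 \<and> \<mu> {\<omega>1, \<omega>2} > 0"
proof -
  let ?\<phi> = "coev_prod (eval_map \<omega>1) (eval_map \<omega>2)"
  let ?\<Omega> = "{\<omega>1, \<omega>2}"
  have QO: "q_integral_on ?\<Omega> A h ?\<phi> = max 0 (min (h \<omega>1 * indicator A \<omega>1) (h \<omega>2 * indicator A \<omega>2))" for A h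
    unfolding q_integral_on_def by (rule Q)
  have mu0: "\<mu> {} = 0"
  proof -
    have add: "\<forall>A\<in>Pow ?\<Omega>. \<forall>B\<in>Pow ?\<Omega>. \<forall>C\<in>Pow ?\<Omega>.
        A \<inter> B = {} \<and> A \<inter> C = {} \<and> B \<inter> C = {} \<longrightarrow>
        \<mu> (A \<union> B \<union> C) = \<mu> (A \<union> B) + \<mu> (A \<union> C) + \<mu> (B \<union> C) - \<mu> A - \<mu> B - \<mu> C"
      using assms(2) unfolding q_measure_def by blast
    have i: "{} \<in> Pow ?\<Omega>" "{\<omega>1} \<in> Pow ?\<Omega>" "{\<omega>2} \<in> Pow ?\<Omega>" by auto
    have d: "{} \<inter> {\<omega>1} = {}" "{} \<inter> {\<omega>2} = {}" "{\<omega>1} \<inter> {\<omega>2} = {}" using assms(1) by auto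
    have "\<mu> ({} \<union> {\<omega>1} \<union> {\<omega>2}) = \<mu> ({} \<union> {\<omega>1}) + \<mu> ({} \<union> {\<omega>2}) + \<mu> ({\<omega>1} \<union> {\<omega>2}) - \<mu> {} - \<mu> {\<omega>1} - \<mu> {\<omega>2}"
      by (rule add[rule_format]) (use i d in auto)
    then show ?thesis by simp
  qed
  show ?thesis
  proof
    assume "actualizes ?\<Omega> \<mu> ?\<phi>"
    then obtain f where f: "\<forall>\<omega>\<in>?\<Omega>. \<forall>\<omega>'\<in>?\<Omega>. f \<omega> \<omega>' = f \<omega>' \<omega> \<and> f \<omega> \<omega>' > 0"
      and m: "\<forall>A\<in>Pow ?\<Omega>. \<mu> A = q_integral ?\<Omega> (\<lambda>\<omega>'. q_integral_on ?\<Omega> A (\<lambda>\<omega>. f \<omega> \<omega>') ?\<phi>) ?\<phi>"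
      unfolding actualizes_def by blast
    have p: "f \<omega>1 \<omega>1 > 0" "f \<omega>1 \<omega>2 > 0" "f \<omega>2 \<omega>1 > 0" "f \<omega>2 \<omega>2 > 0" using f by (meson insertI1 insertI2 singletonI)+
    have "\<mu> {\<omega>1} = 0" using m[rule_format, of "{\<omega>1}"] p assms(1) by (simp add: Q QO)
    moreover have "\<mu> {\<omega>2} = 0" using m[rule_format, of "{\<omega>2}"] p assms(1) by (simp add: Q QO)
    moreover have "\<mu> ?\<Omega> > 0" using m[rule_format, of "?\<Omega>"] p assms(1) by (simp add: Q QO)
    ultimately show "\<mu> {\<omega>1} = 0 \<and> \<mu> {\<omega>2} = 0 \<and> \<mu> ?\<Omega> > 0" by blast
  next
    assume h: "\<mu> {\<omega>1} = 0 \<and> \<mu> {\<omega>2} = 0 \<and> \<mu> ?\<Omega> > 0"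
    let ?c = "\<mu> ?\<Omega>"
    show "actualizes ?\<Omega> \<mu> ?\<phi>"
      unfolding actualizes_def
    proof (intro exI[of _ "\<lambda>_ _. ?c"] conjI ballI)
      fix \<omega> \<omega>' assume "\<omega> \<in> ?\<Omega>" "\<omega>' \<in> ?\<Omega>"
      show "?c = ?c" by simp
      show "?c > 0" using h by simp
    next
      fix A assume "A \<in> Pow ?\<Omega>"
      then have "A = {} \<or> A = {\<omega>1} \<or> A = {\<omega>2} \<or> A = ?\<Omega>"
        by (cases "\<omega>1 \<in> A"; cases "\<omega>2 \<in> A") auto
      then show "\<mu> A = q_integral ?\<Omega> (\<lambda>\<omega>'. q_integral_on ?\<Omega> A (\<lambda>\<omega>. ?c) ?\<phi>) ?\<phi>"
        using h mu0 assms(1) by (auto simp: Q QO)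
    qed
  qed
qed

end
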